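(* Let $p=p(n)\in[0,1]$ and let $x=x(n)$ be an integer with $1\le x\le n$, $x=o(n)$ and $npx=o(1)$. Let $t$ be an integer with $n/(2x)\le t\le n/x$, and let $B_1,\dots,B_t$ be vertex-disjoint trees, each on at most $x$ vertices. Let $H_0$ be the disjoint union of $B_1,\dots,B_t$, and let $R_0:=H_0\cup G_0$, where $G_0$ is the random graph on $V(H_0)$ in which each pair of vertices is an edge independently with probability $p$. Then whp $R_0$ is a forest in which every connected component has $O(x\log(n/x))$ vertices.
   Context: Asymptotics are as $n\to\infty$; whp means with probability $1-o(1)$; $O(\cdot)$ hides an absolute constant. *)

theory Defs
  imports "HOL-Probability.Probability"
begin

definition is_graph :: "'a set \<Rightarrow> 'a set set \<Rightarrow> bool" where
  "is_graph V E \<longleftrightarrow> finite V \<and> (\<forall>e\<in>E. e \<subseteq> V \<and> card e = 2)"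

definition has_cycle :: "'a set \<Rightarrow> 'a set set \<Rightarrow> bool" where
  "has_cycle V E \<longleftrightarrow> (\<exists>vs. length vs \<ge> 3 \<and> distinct vs \<and> set vs \<subseteq> V \<and>
      (\<forall>i < length vs - 1. {vs ! i, vs ! Suc i} \<in> E) \<and> {last vs, hd vs} \<in> E)"

definition forest :: "'a set \<Rightarrow> 'a set set \<Rightarrow> bool" where
  "forest V E \<longleftrightarrow> is_graph V E \<and> \<not> has_cycle V E"

definition reachable :: "'a set \<Rightarrow> 'a set set \<Rightarrow> 'a \<Rightarrow> 'a \<Rightarrow> bool" where
  "reachable V E u v \<longleftrightarrow> u \<in> V \<and> v \<in> V \<and> (u, v) \<in> {(a, b). {a, b} \<in> E}\<^sup>*"

definition components :: "'a set \<Rightarrow> 'a set set \<Rightarrow> 'a set set" where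
  "components V E = {{v \<in> V. reachable V E u v} | u. u \<in> V}"

definition is_tree :: "'a set \<Rightarrow> 'a set set \<Rightarrow> bool" where
  "is_tree V E \<longleftrightarrow> forest V E \<and> V \<noteq> {} \<and> (\<forall>u\<in>V. \<forall>v\<in>V. reachable V E u v)"

definition pairs :: "'a set \<Rightarrow> 'a set set" where
  "pairs V = {e. e \<subseteq> V \<and> card e = 2}"

definition random_graph :: "'a set \<Rightarrow> real \<Rightarrow> 'a set set pmf" where
  "random_graph V p = map_pmf (\<lambda>f. {e \<in> pairs V. f e}) (Pi_pmf (pairs V) False (\<lambda>_. bernoulli_pmf p))"

end

theory Submission
  imports Defs
begin



lemma pow_fact_le_exp: "(real s)^s / fact s \<le> exp (real s)"
proof -
  have S: "(\<lambda>n. real s^n /\<^sub>R fact n) sums exp (real s)" by (rule exp_converges)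
  have "sum (\<lambda>n. real s^n /\<^sub>R fact n) {s} \<le> suminf (\<lambda>n. real s^n /\<^sub>R fact n)"
    by (rule sum_le_suminf[OF sums_summable[OF S]]) auto
  thus ?thesis using sums_unique[OF S] by (simp add: divide_inverse mult.commute)
qed

lemma binom_le_real: "real (n choose k) \<le> real n ^ k / fact k"
proof -
  have "real ((n choose k) * fact k) \<le> real (n^k)" using binomial_fact_pow[of n k] by linarith
  hence "real (n choose k) * fact k \<le> real n ^ k" by simp
  thus ?thesis by (simp add: field_simps)
qed

lemma prob_subset_rg:
  assumes "finite V" "S \<subseteq> pairs V" "0 \<le> p" "p \<le> 1"
  shows "measure_pmf.prob (random_graph V p) {G. S \<subseteq> G} = p ^ card S"
proof -
  have fin: "finite (pairs V)" using assms(1) unfolding pairs_def by (simp add: finite_Pow_iff)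
  have eq: "(\<lambda>f. {e \<in> pairs V. f e}) -` {G. S \<subseteq> G} = Pi (pairs V) (\<lambda>e. if e \<in> S then {True} else UNIV)"
    using assms(2) by (auto simp: Pi_def)
  have "measure_pmf.prob (random_graph V p) {G. S \<subseteq> G}
     = (\<Prod>e\<in>pairs V. measure_pmf.prob (bernoulli_pmf p) (if e \<in> S then {True} else UNIV))"
    unfolding random_graph_def measure_map_pmf eq by (rule measure_Pi_pmf_Pi[OF fin])
  also have "\<dots> = (\<Prod>e\<in>pairs V. if e \<in> S then p else 1)"
    by (rule prod.cong) (use assms in \<open>auto simp: measure_pmf_single\<close>)
  also have "\<dots> = p ^ card S"
    using assms(2) fin by (simp add: prod.If_cases Int_absorb1 Int_absorb2 inf.absorb2)
  finally show ?thesis .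
qed




lemma finite_pairs: "finite V \<Longrightarrow> finite (pairs V)"
  unfolding pairs_def by (simp add: finite_Pow_iff)

lemma pairs_mono: "A \<subseteq> B \<Longrightarrow> pairs A \<subseteq> pairs B"
  unfolding pairs_def by auto

lemma card_pairs_le: assumes "finite W" shows "card (pairs W) \<le> card W ^ 2"
proof -
  have "pairs W \<subseteq> (\<lambda>(a,b). {a,b}) ` (W \<times> W)"
  proof
    fix e assume "e \<in> pairs W"
    then have "e \<subseteq> W" "card e = 2" by (auto simp: pairs_def)
    then obtain a b where "e = {a,b}" by (auto simp: card_2_iff)
    with \<open>e \<subseteq> W\<close> show "e \<in> (\<lambda>(a,b). {a,b}) ` (W \<times> W)" by auto
  qed
  hence "card (pairs W) \<le> card ((\<lambda>(a,b). {a,b}) ` (W \<times> W))"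
    by (intro card_mono) (auto simp: assms)
  also have "\<dots> \<le> card (W \<times> W)" by (rule card_image_le) (simp add: assms)
  finally show ?thesis by (simp add: power2_eq_square card_cartesian_product)
qed

lemma prob_dense:
  assumes "finite V" "Q \<subseteq> pairs V" "0 \<le> p" "p \<le> 1"
  shows "measure_pmf.prob (random_graph V p) {G. m \<le> card (G \<inter> Q)} \<le> real (card Q choose m) * p ^ m"
proof -
  have finQ: "finite Q" using finite_pairs[OF assms(1)] assms(2) finite_subset by blast
  let ?I = "{S. S \<subseteq> Q \<and> card S = m}"
  have finI: "finite ?I" using finQ by simp
  have sub: "{G. m \<le> card (G \<inter> Q)} \<subseteq> (\<Union>S\<in>?I. {G. S \<subseteq> G})"
  proof
    fix G assume "G \<in> {G. m \<le> card (G \<inter> Q)}"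
    then obtain S where "S \<subseteq> G \<inter> Q" "card S = m"
      using obtain_subset_with_card_n by (metis mem_Collect_eq)
    thus "G \<in> (\<Union>S\<in>?I. {G. S \<subseteq> G})" by auto
  qed
  have "measure_pmf.prob (random_graph V p) {G. m \<le> card (G \<inter> Q)}
      \<le> measure_pmf.prob (random_graph V p) (\<Union>S\<in>?I. {G. S \<subseteq> G})"
    by (rule measure_pmf.finite_measure_mono[OF sub]) simp
  also have "\<dots> \<le> (\<Sum>S\<in>?I. measure_pmf.prob (random_graph V p) {G. S \<subseteq> G})"
    by (rule measure_pmf.finite_measure_subadditive_finite[OF finI]) simp
  also have "\<dots> = (\<Sum>S\<in>?I. p ^ m)"
    by (rule sum.cong) (use assms in \<open>auto intro!: prob_subset_rg\<close>)
  also have "\<dots> = real (card Q choose m) * p ^ m" using n_subsets[OF finQ] by simp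
  finally show ?thesis .
qed




locale TS =
  fixes t :: nat and B :: "nat \<Rightarrow> nat set" and BE :: "nat \<Rightarrow> nat set set" and x :: nat
  assumes trees: "\<forall>i<t. is_tree (B i) (BE i) \<and> card (B i) \<le> x"
  and disj: "\<forall>i<t. \<forall>j<t. i \<noteq> j \<longrightarrow> B i \<inter> B j = {}"

begin

lemma finB: "i < t \<Longrightarrow> finite (B i)"
  using trees unfolding is_tree_def forest_def is_graph_def by auto

lemma finV: "finite (\<Union>i<t. B i)" using finB by auto

lemma card_VU: assumes "U \<subseteq> {..<t}" shows "card (\<Union>u\<in>U. B u) \<le> card U * x"
proof -
  have "card (\<Union>u\<in>U. B u) \<le> (\<Sum>u\<in>U. card (B u))" by (rule card_UN_le) (use assms finite_subset in auto)
  also have "\<dots> \<le> (\<Sum>u\<in>U. x)" by (rule sum_mono) (use assms trees in auto)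
  finally show ?thesis by simp
qed

lemma prob_W:
  assumes "0 \<le> p" "p \<le> 1"
  shows "measure_pmf.prob (random_graph (\<Union>i<t. B i) p)
     {G. \<exists>U \<subseteq> {..<t}. card U = s \<and> m \<le> card (G \<inter> pairs (\<Union>u\<in>U. B u))}
    \<le> real (t choose s) * (real ((s*x)^2))^m / fact m * p^m"
proof -
  let ?V = "\<Union>i<t. B i"
  let ?I = "{U. U \<subseteq> {..<t} \<and> card U = s}"
  have finI: "finite ?I" by simp
  have sub: "{G. \<exists>U \<subseteq> {..<t}. card U = s \<and> m \<le> card (G \<inter> pairs (\<Union>u\<in>U. B u))}
     \<subseteq> (\<Union>U\<in>?I. {G. m \<le> card (G \<inter> pairs (\<Union>u\<in>U. B u))})" by auto
  have "measure_pmf.prob (random_graph ?V p) {G. \<exists>U \<subseteq> {..<t}. card U = s \<and> m \<le> card (G \<inter> pairs (\<Union>u\<in>U. B u))}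
      \<le> measure_pmf.prob (random_graph ?V p) (\<Union>U\<in>?I. {G. m \<le> card (G \<inter> pairs (\<Union>u\<in>U. B u))})"
    by (rule measure_pmf.finite_measure_mono[OF sub]) simp
  also have "\<dots> \<le> (\<Sum>U\<in>?I. measure_pmf.prob (random_graph ?V p) {G. m \<le> card (G \<inter> pairs (\<Union>u\<in>U. B u))})"
    by (rule measure_pmf.finite_measure_subadditive_finite[OF finI]) simp
  also have "\<dots> \<le> (\<Sum>U\<in>?I. (real ((s*x)^2))^m / fact m * p^m)"
  proof (rule sum_mono)
    fix U assume U: "U \<in> ?I"
    have Usub: "(\<Union>u\<in>U. B u) \<subseteq> ?V" using U by auto
    have finVU: "finite (\<Union>u\<in>U. B u)" using finV Usub finite_subset by blast
    have c1: "card (pairs (\<Union>u\<in>U. B u)) \<le> (s*x)^2"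
    proof -
      have "card (pairs (\<Union>u\<in>U. B u)) \<le> card (\<Union>u\<in>U. B u) ^ 2" by (rule card_pairs_le[OF finVU])
      also have "\<dots> \<le> (s*x)^2" using card_VU[of U] U by (intro power_mono) auto
      finally show ?thesis .
    qed
    have "measure_pmf.prob (random_graph ?V p) {G. m \<le> card (G \<inter> pairs (\<Union>u\<in>U. B u))}
        \<le> real (card (pairs (\<Union>u\<in>U. B u)) choose m) * p ^ m"
      by (rule prob_dense[OF finV pairs_mono[OF Usub] assms])
    also have "\<dots> \<le> (real (card (pairs (\<Union>u\<in>U. B u))) ^ m / fact m) * p ^ m"
      by (rule mult_right_mono[OF binom_le_real]) (use assms in auto)
    also have "\<dots> \<le> (real ((s*x)^2))^m / fact m * p^m"
    proof -
      have "real (card (pairs (\<Union>u\<in>U. B u))) \<le> real ((s*x)^2)" using c1 by linarith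
      thus ?thesis by (intro mult_right_mono divide_right_mono power_mono) (use assms in auto)
    qed
    finally show "measure_pmf.prob (random_graph ?V p) {G. m \<le> card (G \<inter> pairs (\<Union>u\<in>U. B u))}
        \<le> (real ((s*x)^2))^m / fact m * p^m" .
  qed
  also have "\<dots> = real (t choose s) * (real ((s*x)^2))^m / fact m * p^m"
    using n_subsets[of "{..<t}" s] by simp
  finally show ?thesis .
qed

end




lemma rtrancl_leave:
  assumes "(a,b) \<in> r\<^sup>*" "a \<in> S" "b \<notin> S"
  shows "\<exists>y z. y \<in> S \<and> z \<notin> S \<and> (y,z) \<in> r"
  using assms
proof (induction rule: rtrancl_induct)
  case base then show ?case by simp
next
  case (step y z)
  show ?case
  proof (cases "y \<in> S")
    case True then show ?thesis using step by blast
  next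
    case False then show ?thesis using step by blast
  qed
qed

lemma rel_sym_rtrancl:
  assumes "(a,b) \<in> {(a,b). {a,b} \<in> E}\<^sup>*"
  shows "(b,a) \<in> {(a,b). {a,b} \<in> E}\<^sup>*"
  using assms
proof (induction rule: rtrancl_induct)
  case base then show ?case by simp
next
  case (step y z)
  have "(z,y) \<in> {(a,b). {a,b} \<in> E}" using step(2) by (simp add: insert_commute)
  then show ?case using step(3) by (rule converse_rtrancl_into_rtrancl)
qed

context TS
begin

lemma BE_sub: "i < t \<Longrightarrow> e \<in> BE i \<Longrightarrow> e \<subseteq> B i \<and> card e = 2"
  using trees unfolding is_tree_def forest_def is_graph_def by auto

lemma E0_local:
  assumes "e \<in> (\<Union>i<t. BE i)" "a \<in> e" "a \<in> B j" "j < t"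
  shows "e \<in> BE j"
proof -
  obtain i where i: "i < t" "e \<in> BE i" using assms(1) by auto
  have "a \<in> B i" using BE_sub[OF i] assms(2) by auto
  hence "i = j" using disj assms(3,4) i(1) by blast
  thus ?thesis using i by simp
qed

lemma graph_R:
  assumes "G \<subseteq> pairs (\<Union>i<t. B i)"
  shows "is_graph (\<Union>i<t. B i) ((\<Union>i<t. BE i) \<union> G)"
  unfolding is_graph_def using finV assms BE_sub by (auto simp: pairs_def) blast

definition tr :: "nat \<Rightarrow> nat" where "tr v = (THE i. i < t \<and> v \<in> B i)"

lemma tr_eq: assumes "v \<in> B i" "i < t" shows "tr v = i"
  unfolding tr_def
proof (rule the_equality)
  show "i < t \<and> v \<in> B i" using assms by simp
  fix j assume "j < t \<and> v \<in> B j" then show "j = i" using disj assms by blast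
qed

lemma tr_V: assumes "v \<in> (\<Union>i<t. B i)" shows "tr v < t \<and> v \<in> B (tr v)"
  using assms tr_eq by auto

end



context TS
begin

lemma comp_witness:
  assumes G: "G \<subseteq> pairs (\<Union>i<t. B i)"
    and K: "K \<in> components (\<Union>i<t. B i) ((\<Union>i<t. BE i) \<union> G)"
    and big: "x * m < card K"
  shows "\<exists>U \<subseteq> {..<t}. card U = Suc m \<and> m \<le> card (G \<inter> pairs (\<Union>u\<in>U. B u))"
proof -
  define V where "V = (\<Union>i<t. B i)"
  define E where "E = (\<Union>i<t. BE i) \<union> G"
  define r where "r = {(a,b). {a,b} \<in> E}"
  obtain u0 where u0: "u0 \<in> V" and Kdef: "K = {v \<in> V. reachable V E u0 v}"
    using K unfolding components_def V_def E_def by auto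
  have Kiff: "v \<in> K \<longleftrightarrow> v \<in> V \<and> (u0, v) \<in> r\<^sup>*" for v
    using u0 unfolding Kdef reachable_def r_def by auto
  have treeK: "B i \<subseteq> K" if hi: "i < t" "B i \<inter> K \<noteq> {}" for i
  proof
    fix w assume w: "w \<in> B i"
    obtain v where v: "v \<in> B i" "v \<in> K" using hi by auto
    have "reachable (B i) (BE i) v w" using trees hi(1) v w unfolding is_tree_def by auto
    hence "(v,w) \<in> {(a,b). {a,b} \<in> BE i}\<^sup>*" unfolding reachable_def by auto
    moreover have "{(a,b). {a,b} \<in> BE i} \<subseteq> r" using hi(1) unfolding r_def E_def by auto
    ultimately have "(v,w) \<in> r\<^sup>*" using rtrancl_mono by blast
    moreover have "(u0,v) \<in> r\<^sup>*" using Kiff v by auto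
    ultimately have "(u0,w) \<in> r\<^sup>*" by simp
    moreover have "w \<in> V" using w hi(1) unfolding V_def by auto
    ultimately show "w \<in> K" using Kiff by auto
  qed
  define TK where "TK = {i \<in> {..<t}. B i \<inter> K \<noteq> {}}"
  have TKsub: "TK \<subseteq> {..<t}" unfolding TK_def by auto
  have finTK: "finite TK" using TKsub finite_subset by blast
  have VUK: "(\<Union>u\<in>U. B u) \<subseteq> K" if "U \<subseteq> TK" for U
    using treeK that unfolding TK_def by blast
  have "K \<subseteq> (\<Union>i\<in>TK. B i)"
  proof
    fix v assume "v \<in> K"
    hence "v \<in> V" using Kiff by auto
    then obtain i where "i < t" "v \<in> B i" unfolding V_def by auto
    thus "v \<in> (\<Union>i\<in>TK. B i)" using \<open>v \<in> K\<close> unfolding TK_def by auto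
  qed
  hence "card K \<le> card (\<Union>i\<in>TK. B i)"
    by (intro card_mono) (use finB TKsub finTK in \<open>auto\<close>)
  also have "\<dots> \<le> card TK * x" by (rule card_VU[OF TKsub])
  finally have "x * m < card TK * x" using big by linarith
  hence TKbig: "Suc m \<le> card TK" by (simp add: mult.commute)
  have grow: "\<exists>U \<subseteq> TK. card U = j \<and> j - 1 \<le> card (G \<inter> pairs (\<Union>u\<in>U. B u))"
    if "1 \<le> j" "j \<le> card TK" for j
    using that
  proof (induction j)
    case 0 then show ?case by simp
  next
    case (Suc j)
    show ?case
    proof (cases "j = 0")
      case True
      have "TK \<noteq> {}" using Suc.prems(2) by (metis card.empty not_less_eq_eq zero_le)
      then obtain i where "i \<in> TK" by blast
      then show ?thesis using True by (intro exI[of _ "{i}"]) auto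
    next
      case False
      then obtain U where U: "U \<subseteq> TK" "card U = j" "j - 1 \<le> card (G \<inter> pairs (\<Union>u\<in>U. B u))"
        using Suc by auto
      have "\<not> TK \<subseteq> U"
      proof
        assume "TK \<subseteq> U"
        hence "card TK \<le> card U" using U(1) finTK finite_subset card_mono by metis
        thus False using U(2) Suc.prems(2) by simp
      qed
      then obtain i' where i': "i' \<in> TK" "i' \<notin> U" by blast
      have "U \<noteq> {}" using U(2) False by auto
      then obtain u where u: "u \<in> U" by blast
      have ut: "u < t" using u U(1) TKsub by auto
      have "B u \<noteq> {}" using trees ut unfolding is_tree_def by simp
      then obtain a where a: "a \<in> B u" by blast
      have i't: "i' < t" using i' TKsub by auto
      have "B i' \<noteq> {}" using trees i't unfolding is_tree_def by simp
      then obtain b where b: "b \<in> B i'" by blast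
      have aK: "a \<in> K" using VUK[OF U(1)] a u by auto
      have bK: "b \<in> K" using VUK[of "{i'}"] i' b by auto
      have ua: "(u0,a) \<in> r\<^sup>*" using aK Kiff by blast
      have ub: "(u0,b) \<in> r\<^sup>*" using bK Kiff by blast
      have "(a,u0) \<in> r\<^sup>*" using rel_sym_rtrancl[of u0 a E] ua unfolding r_def by blast
      hence "(a,b) \<in> r\<^sup>*" using ub by (rule rtrancl_trans)
      moreover have "b \<notin> (\<Union>u\<in>U. B u)"
      proof
        assume "b \<in> (\<Union>u\<in>U. B u)"
        then obtain u' where "u' \<in> U" "b \<in> B u'" by auto
        moreover have "u' < t" using \<open>u' \<in> U\<close> U(1) TKsub by auto
        ultimately have "u' = i'" using disj b i't by blast
        thus False using \<open>u' \<in> U\<close> i' by simp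
      qed
      ultimately obtain y z where yz: "y \<in> (\<Union>u\<in>U. B u)" "z \<notin> (\<Union>u\<in>U. B u)" "(y,z) \<in> r"
        using rtrancl_leave[of a b r "\<Union>u\<in>U. B u"] a u by blast
      obtain u1 where u1: "u1 \<in> U" "y \<in> B u1" using yz(1) by auto
      have u1t: "u1 < t" using u1 U(1) TKsub by auto
      have yzE: "{y,z} \<in> E" using yz(3) unfolding r_def by simp
      have notE0: "{y,z} \<notin> (\<Union>i<t. BE i)"
      proof
        assume "{y,z} \<in> (\<Union>i<t. BE i)"
        hence "{y,z} \<in> BE u1" using E0_local u1 u1t by blast
        hence "z \<in> B u1" using BE_sub[OF u1t] by auto
        thus False using yz(2) u1 by auto
      qed
      hence yzG: "{y,z} \<in> G" using yzE unfolding E_def by auto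
      hence "{y,z} \<in> pairs V" using G unfolding V_def by auto
      hence zV: "z \<in> V" and c2: "card {y,z} = 2" unfolding pairs_def by auto
      obtain w' where w': "w' < t" "z \<in> B w'" using zV unfolding V_def by auto
      have "y \<in> K" using VUK[OF U(1)] yz(1) by blast
      hence "(u0,y) \<in> r\<^sup>*" using Kiff by blast
      hence "(u0,z) \<in> r\<^sup>*" using yz(3) by (rule rtrancl_into_rtrancl)
      hence zK: "z \<in> K" using Kiff zV by auto
      have w'TK: "w' \<in> TK" using w' zK unfolding TK_def by auto
      have w'U: "w' \<notin> U" using w' yz(2) by auto
      define U' where "U' = insert w' U"
      have U'sub: "U' \<subseteq> TK" using U(1) w'TK unfolding U'_def by auto
      have finU: "finite U" using U(1) finTK finite_subset by blast
      have cU': "card U' = Suc j" using U(2) w'U finU unfolding U'_def by simp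
      have finP: "finite (pairs (\<Union>u\<in>U'. B u))"
      proof (rule finite_pairs)
        have "finite U'" by (rule finite_subset[OF U'sub finTK])
        moreover have "\<forall>u\<in>U'. finite (B u)" using U'sub TKsub finB by blast
        ultimately show "finite (\<Union>u\<in>U'. B u)" by blast
      qed
      have "insert {y,z} (G \<inter> pairs (\<Union>u\<in>U. B u)) \<subseteq> G \<inter> pairs (\<Union>u\<in>U'. B u)"
        using yzG c2 u1 w' unfolding U'_def pairs_def by auto
      hence "card (insert {y,z} (G \<inter> pairs (\<Union>u\<in>U. B u))) \<le> card (G \<inter> pairs (\<Union>u\<in>U'. B u))"
        by (intro card_mono) (use finP in auto)
      moreover have "{y,z} \<notin> pairs (\<Union>u\<in>U. B u)" using yz(2) unfolding pairs_def by auto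
      moreover have "finite (G \<inter> pairs (\<Union>u\<in>U. B u))"
      proof -
        have "pairs (\<Union>u\<in>U. B u) \<subseteq> pairs (\<Union>u\<in>U'. B u)" by (rule pairs_mono) (auto simp: U'_def)
        hence "G \<inter> pairs (\<Union>u\<in>U. B u) \<subseteq> pairs (\<Union>u\<in>U'. B u)" by blast
        thus ?thesis using finP by (rule finite_subset)
      qed
      ultimately have "Suc (card (G \<inter> pairs (\<Union>u\<in>U. B u))) \<le> card (G \<inter> pairs (\<Union>u\<in>U'. B u))"
        by simp
      then show ?thesis using U(3) U'sub cU' False by (intro exI[of _ U']) auto
    qed
  qed
  obtain U where "U \<subseteq> TK" "card U = Suc m" "Suc m - 1 \<le> card (G \<inter> pairs (\<Union>u\<in>U. B u))"
    using grow[of "Suc m"] TKbig by auto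
  thus ?thesis using TKsub by (intro exI[of _ U]) auto
qed

end



lemma mod_two_steps:
  assumes "3 \<le> (L::nat)" "a mod L = Suc b mod L" "Suc a mod L = b mod L"
  shows False
proof -
  have "Suc (Suc b) mod L = Suc (Suc b mod L) mod L" by (simp add: mod_Suc_eq)
  also have "\<dots> = Suc (a mod L) mod L" using assms(2) by simp
  also have "\<dots> = Suc a mod L" by (simp add: mod_Suc_eq)
  also have "\<dots> = b mod L" by (rule assms(3))
  finally have "(b + 2) mod L = b mod L" by simp
  hence "L dvd (b + 2 - b)" using mod_eq_dvd_iff_nat[of b "b+2" L] by simp
  hence "L dvd 2" by simp
  hence "L \<le> 2" by (simp add: dvd_imp_le)
  thus False using assms(1) by simp
qed

context TS
begin

lemma cyc_witness:
  assumes G: "G \<subseteq> pairs (\<Union>i<t. B i)"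
    and cyc: "has_cycle (\<Union>i<t. B i) ((\<Union>i<t. BE i) \<union> G)"
  shows "\<exists>U \<subseteq> {..<t}. U \<noteq> {} \<and> card U \<le> card (G \<inter> pairs (\<Union>u\<in>U. B u))"
proof -
  define V where "V = (\<Union>i<t. B i)"
  define E0 where "E0 = (\<Union>i<t. BE i)"
  define E where "E = E0 \<union> G"
  obtain vs where vs: "length vs \<ge> 3" "distinct vs" "set vs \<subseteq> V"
      "\<forall>i < length vs - 1. {vs ! i, vs ! Suc i} \<in> E" "{last vs, hd vs} \<in> E"
    using cyc unfolding has_cycle_def V_def E_def E0_def by blast
  define L where "L = length vs"
  have L3: "3 \<le> L" using vs(1) L_def by simp
  have Lpos: "0 < L" using L3 by simp
  have vsne: "vs \<noteq> []" using L3 L_def by auto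
  define w where "w k = vs ! (k mod L)" for k
  have wV: "w k \<in> V" for k using vs(3) Lpos unfolding w_def L_def by auto
  have wmod: "w (k mod L) = w k" for k unfolding w_def by simp
  have wSmod: "w (Suc (k mod L)) = w (Suc k)" for k unfolding w_def by (simp add: mod_Suc_eq)
  have winj: "a mod L = b mod L" if "w a = w b" for a b
    using that vs(2) Lpos unfolding w_def L_def by (simp add: nth_eq_iff_index_eq)
  have Ew: "{w k, w (Suc k)} \<in> E" for k
  proof (cases "Suc (k mod L) < L")
    case True
    hence "Suc k mod L = Suc (k mod L)" by (simp add: mod_Suc)
    moreover have "k mod L < length vs - 1" using True L_def by simp
    ultimately show ?thesis using vs(4) unfolding w_def by auto
  next
    case False
    hence eq: "Suc (k mod L) = L" using Lpos by (meson Suc_lessI mod_less_divisor)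
    hence "Suc k mod L = 0" by (simp add: mod_Suc)
    hence "w (Suc k) = hd vs" unfolding w_def using vsne by (simp add: hd_conv_nth)
    moreover have "w k = last vs" unfolding w_def using vsne eq L_def
      by (metis diff_Suc_1 last_conv_nth)
    ultimately show ?thesis using vs(5) by (simp add: insert_commute)
  qed
  have edge_inj: "a mod L = b mod L" if "{w a, w (Suc a)} = {w b, w (Suc b)}" for a b
  proof -
    from that have "(w a = w b \<and> w (Suc a) = w (Suc b)) \<or> (w a = w (Suc b) \<and> w (Suc a) = w b)"
      by (simp add: doubleton_eq_iff)
    thus ?thesis
    proof
      assume "w a = w b \<and> w (Suc a) = w (Suc b)" thus ?thesis using winj by blast
    next
      assume h: "w a = w (Suc b) \<and> w (Suc a) = w b"
      hence "a mod L = Suc b mod L" "Suc a mod L = b mod L" using winj by blast+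
      thus ?thesis using mod_two_steps[OF L3] by blast
    qed
  qed
  have EG: "{w k, w (Suc k)} \<in> G" if "tr (w k) \<noteq> tr (w (Suc k))" for k
  proof (rule ccontr)
    assume "{w k, w (Suc k)} \<notin> G"
    hence "{w k, w (Suc k)} \<in> E0" using Ew unfolding E_def by auto
    moreover have "tr (w k) < t" "w k \<in> B (tr (w k))" using tr_V wV unfolding V_def by auto
    ultimately have "{w k, w (Suc k)} \<in> BE (tr (w k))" using E0_local unfolding E0_def by blast
    hence "w (Suc k) \<in> B (tr (w k))" using BE_sub \<open>tr (w k) < t\<close> by blast
    hence "tr (w (Suc k)) = tr (w k)" using tr_eq \<open>tr (w k) < t\<close> by blast
    thus False using that by simp
  qed
  have isg: "is_graph V E" using graph_R[OF G] unfolding V_def E_def E0_def .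
  have card2: "card {w k, w (Suc k)} = 2" for k
    using isg Ew[of k] unfolding is_graph_def by blast
  define U where "U = (\<lambda>k. tr (w k)) ` {..<L}"
  have Uall: "tr (w k) \<in> U" for k
  proof -
    have "k mod L \<in> {..<L}" using Lpos by simp
    hence "tr (w (k mod L)) \<in> U" unfolding U_def by (rule imageI)
    thus ?thesis by (simp add: wmod)
  qed
  have trw: "tr (w k) < t \<and> w k \<in> B (tr (w k))" for k
    using tr_V[of "w k"] wV[of k] unfolding V_def by blast
  have Usub: "U \<subseteq> {..<t}" unfolding U_def using trw by auto
  have Une: "U \<noteq> {}" unfolding U_def using Lpos by auto
  have finU: "finite U" unfolding U_def by simp
  have wVU: "w k \<in> (\<Union>u\<in>U. B u)" for k using Uall[of k] trw[of k] by blast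
  have finP: "finite (pairs (\<Union>u\<in>U. B u))"
  proof (rule finite_pairs)
    have "\<forall>u\<in>U. finite (B u)" using Usub finB by blast
    thus "finite (\<Union>u\<in>U. B u)" using finU by blast
  qed
  have inP: "{w k, w (Suc k)} \<in> pairs (\<Union>u\<in>U. B u)" for k
    using wVU[of k] wVU[of "Suc k"] card2[of k] unfolding pairs_def by auto
  show ?thesis
  proof (cases "card U = 1")
    case True
    then obtain u where Uu: "U = {u}" using card_1_singletonE by blast
    have ut: "u < t" using Usub Uu by auto
    show ?thesis
    proof (cases "\<exists>k. {w k, w (Suc k)} \<in> G")
      case True
      then obtain k where "{w k, w (Suc k)} \<in> G" by blast
      hence "{w k, w (Suc k)} \<in> G \<inter> pairs (\<Union>u\<in>U. B u)" using inP by blast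
      hence "G \<inter> pairs (\<Union>u\<in>U. B u) \<noteq> {}" by blast
      moreover have "finite (G \<inter> pairs (\<Union>u\<in>U. B u))" using finP by simp
      ultimately have "card (G \<inter> pairs (\<Union>u\<in>U. B u)) \<noteq> 0" by simp
      hence "card U \<le> card (G \<inter> pairs (\<Union>u\<in>U. B u))" using \<open>card U = 1\<close> by linarith
      thus ?thesis using Usub Une by (intro exI[of _ U]) simp
    next
      case False
      have wB: "w k \<in> B u" for k using wVU[of k] Uu by simp
      have inBE: "{w k, w (Suc k)} \<in> BE u" for k
      proof -
        have "{w k, w (Suc k)} \<in> E0" using Ew[of k] False unfolding E_def by blast
        moreover have "w k \<in> {w k, w (Suc k)}" by simp
        ultimately show ?thesis using E0_local[of "{w k, w (Suc k)}" "w k" u, OF _ _ wB[of k] ut] unfolding E0_def by blast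
      qed
      have "has_cycle (B u) (BE u)"
        unfolding has_cycle_def
      proof (intro exI[of _ vs] conjI)
        show "3 \<le> length vs" "distinct vs" by (rule vs(1), rule vs(2))
        show "set vs \<subseteq> B u"
        proof
          fix v assume "v \<in> set vs"
          then obtain i where "i < L" "v = vs ! i" unfolding L_def using in_set_conv_nth[of v vs] by blast
          hence "v = w i" unfolding w_def by simp
          thus "v \<in> B u" using wB by simp
        qed
        show "\<forall>i < length vs - 1. {vs ! i, vs ! Suc i} \<in> BE u"
        proof (intro allI impI)
          fix i assume "i < length vs - 1"
          hence "w i = vs ! i" "w (Suc i) = vs ! Suc i" unfolding w_def L_def by auto
          thus "{vs ! i, vs ! Suc i} \<in> BE u" using inBE[of i] by simp
        qed
        have "w (L - 1) = last vs" unfolding w_def L_def using vsne by (simp add: last_conv_nth)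
        moreover have "w (Suc (L - 1)) = hd vs" unfolding w_def using vsne Lpos by (simp add: hd_conv_nth)
        ultimately show "{last vs, hd vs} \<in> BE u" using inBE[of "L - 1"] by simp
      qed
      moreover have "\<not> has_cycle (B u) (BE u)"
        using trees ut unfolding is_tree_def forest_def by blast
      ultimately show ?thesis by contradiction
    qed
  next
    case False
    have "card U \<noteq> 0" using Une finU by simp
    hence U2: "2 \<le> card U" using False by linarith
    have entry: "\<exists>k<L. tr (w k) \<noteq> u \<and> tr (w (Suc k)) = u" if uU: "u \<in> U" for u
    proof -
      obtain j0 where j0: "j0 < L" "tr (w j0) = u" using uU unfolding U_def by auto
      have "\<exists>u'\<in>U. u' \<noteq> u"
      proof (rule ccontr)
        assume "\<not> (\<exists>u'\<in>U. u' \<noteq> u)"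
        hence "U = {u}" using uU by blast
        thus False using U2 by simp
      qed
      then obtain i0 where i0: "i0 < L" "tr (w i0) \<noteq> u" unfolding U_def by auto
      show ?thesis
      proof (rule ccontr)
        assume nex: "\<not> ?thesis"
        have step: "tr (w (Suc k)) \<noteq> u" if "tr (w k) \<noteq> u" for k
        proof
          assume h: "tr (w (Suc k)) = u"
          have "k mod L < L" using Lpos by simp
          moreover have "tr (w (k mod L)) \<noteq> u" using that wmod by simp
          moreover have "tr (w (Suc (k mod L))) = u" using h wSmod by simp
          ultimately show False using nex by blast
        qed
        have all: "tr (w (i0 + d)) \<noteq> u" for d
        proof (induction d)
          case 0 then show ?case using i0 by simp
        next
          case (Suc d) then show ?case using step[of "i0 + d"] by simp
        qed
        have "w (i0 + (j0 + L - i0)) = w j0"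
          using i0(1) unfolding w_def by simp
        thus False using all[of "j0 + L - i0"] j0 by simp
      qed
    qed
    then obtain f where f: "\<forall>u\<in>U. f u < L \<and> tr (w (f u)) \<noteq> u \<and> tr (w (Suc (f u))) = u"
      using bchoice[of U "\<lambda>u k. k < L \<and> tr (w k) \<noteq> u \<and> tr (w (Suc k)) = u"] by blast
    define g where "g u = {w (f u), w (Suc (f u))}" for u
    have ginj: "inj_on g U"
    proof (rule inj_onI)
      fix u v assume uv: "u \<in> U" "v \<in> U" "g u = g v"
      hence "f u mod L = f v mod L" using edge_inj unfolding g_def by blast
      hence "f u = f v" using f uv by simp
      thus "u = v" using f uv by metis
    qed
    have gsub: "g ` U \<subseteq> G \<inter> pairs (\<Union>u\<in>U. B u)"
    proof
      fix e assume "e \<in> g ` U"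
      then obtain u where u: "u \<in> U" "e = g u" by blast
      have "tr (w (f u)) \<noteq> tr (w (Suc (f u)))" using f u by simp
      hence "e \<in> G" using EG u unfolding g_def by simp
      moreover have "e \<in> pairs (\<Union>u\<in>U. B u)" using inP u unfolding g_def by simp
      ultimately show "e \<in> G \<inter> pairs (\<Union>u\<in>U. B u)" by blast
    qed
    have "card U \<le> card (G \<inter> pairs (\<Union>u\<in>U. B u))"
      using card_inj_on_le[OF ginj gsub] finP by simp
    thus ?thesis using Usub Une by blast
  qed
qed

end



lemma geo_small:
  fixes q :: real assumes "0 \<le> q" "2 * q \<le> 1"
  shows "(\<Sum>s\<in>{1..N}. q^s) \<le> 2*q - 2*q^(Suc N)"
proof (induction N)
  case 0 then show ?case by simp
next
  case (Suc N)
  have "(\<Sum>s\<in>{1..Suc N}. q^s) = (\<Sum>s\<in>{1..N}. q^s) + q^(Suc N)" by simp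
  also have "\<dots> \<le> 2*q - 2*q^(Suc N) + q^(Suc N)" using Suc by simp
  also have "\<dots> \<le> 2*q - 2*q^(Suc (Suc N))"
  proof -
    have "2 * q^(Suc (Suc N)) = (2*q) * q^(Suc N)" by simp
    also have "\<dots> \<le> 1 * q^(Suc N)" by (rule mult_right_mono) (use assms in auto)
    finally show ?thesis by simp
  qed
  finally show ?case .
qed

lemma num_cyc:
  fixes p :: real assumes "0 \<le> p"
  shows "real (t choose s) * (real ((s*x)^2))^s / fact s * p^s \<le> (exp 2 * (real t * real x^2 * p))^s"
proof -
  have a: "real (t choose s) \<le> real t ^ s / fact s" by (rule binom_le_real)
  have f: "(real s)^s / fact s \<le> exp (real s)" by (rule pow_fact_le_exp)
  have "real (t choose s) * (real ((s*x)^2))^s / fact s * p^s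
      \<le> (real t ^ s / fact s) * (real ((s*x)^2))^s / fact s * p^s"
    by (intro mult_right_mono divide_right_mono mult_right_mono a) (use assms in auto)
  also have "\<dots> = (real t * real x^2 * p)^s * ((real s)^s / fact s)^2"
    by (simp add: power_mult_distrib power2_eq_square field_simps power_mult[symmetric] mult.commute)
  also have "\<dots> \<le> (real t * real x^2 * p)^s * (exp (real s))^2"
    by (intro mult_left_mono power_mono f) (use assms in auto)
  also have "\<dots> = (exp 2 * (real t * real x^2 * p))^s"
    by (simp add: power_mult_distrib exp_of_nat_mult[symmetric] power2_eq_square exp_add[symmetric]
        mult.commute)
  finally show ?thesis .
qed

lemma num_comp:
  fixes p :: real assumes "0 \<le> p"
  shows "real (t choose Suc m) * (real ((Suc m*x)^2))^m / fact m * p^m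
     \<le> exp 2 * real t * (exp 2 * (real t * real x^2 * p))^m"
proof -
  define k where "k = Suc m"
  define A where "A = (real k)^k / fact k"
  have A: "A \<le> exp (real k)" unfolding A_def by (rule pow_fact_le_exp)
  have A0: "0 \<le> A" unfolding A_def by simp
  have a: "real (t choose k) \<le> real t ^ k / fact k" by (rule binom_le_real)
  have fk: "fact k = real k * fact m" unfolding k_def by simp
  have "real (t choose Suc m) * (real ((Suc m*x)^2))^m / fact m * p^m
      \<le> (real t ^ k / fact k) * (real ((k*x)^2))^m / fact m * p^m"
    unfolding k_def[symmetric]
    by (intro mult_right_mono divide_right_mono mult_right_mono a) (use assms in auto)
  also have "\<dots> = real t * (real t * real x^2 * p)^m * (A * (A / real k))"
  proof -
    define r where "r = real k"
    define F where "F = (fact m :: real)"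
    have r0: "r > 0" unfolding r_def k_def by simp
    have F0: "F > 0" unfolding F_def by simp
    have kk: "real ((k*x)^2) = r^2 * real x ^ 2" unfolding r_def by (simp add: power_mult_distrib)
    have rk: "r ^ k = r * r^m" unfolding k_def by simp
    have tk: "real t ^ k = real t * real t^m" unfolding k_def by simp
    have "(real t ^ k / fact k) * (real ((k*x)^2))^m / fact m * p^m
        = (real t * real t^m) / (r * F) * (r^2 * real x^2)^m / F * p^m"
      unfolding kk tk fk r_def F_def by simp
    also have "\<dots> = real t * (real t * real x^2 * p)^m * ((r^m / F) * ((r^m / F) / r))"
      using r0 F0 by (simp add: power_mult_distrib field_simps power_mult[symmetric] mult.commute power_add[symmetric] mult_2_right)
    also have "r^m / F = A" unfolding A_def fk F_def rk[unfolded r_def] r_def using r0[unfolded r_def] by simp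
    finally show ?thesis unfolding r_def .
  qed
  also have "\<dots> \<le> real t * (real t * real x^2 * p)^m * (A * A)"
  proof -
    have "A / real k \<le> A" using A0 by (simp add: k_def divide_le_eq mult_le_cancel_left1)
    hence "A * (A / real k) \<le> A * A" using A0 by (rule mult_left_mono) 
    moreover have "0 \<le> real t * (real t * real x^2 * p)^m" using assms by simp
    ultimately show ?thesis by (rule mult_left_mono)
  qed
  also have "\<dots> \<le> real t * (real t * real x^2 * p)^m * (exp (real k) * exp (real k))"
  proof -
    have "A * A \<le> exp (real k) * exp (real k)" by (rule mult_mono[OF A A]) (use A0 in auto)
    moreover have "0 \<le> real t * (real t * real x^2 * p)^m" using assms by simp
    ultimately show ?thesis by (rule mult_left_mono)
  qed
  also have "\<dots> = exp 2 * real t * (exp 2 * (real t * real x^2 * p))^m"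
  proof -
    have "exp (real k) * exp (real k) = exp 2 * (exp 2)^m"
      unfolding k_def by (simp add: exp_add[symmetric] exp_of_nat_mult[symmetric] algebra_simps)
    thus ?thesis by (simp add: power_mult_distrib)
  qed
  finally show ?thesis .
qed




context TS begin

lemma bad_bound:
  assumes p: "0 \<le> p" "p \<le> 1"
    and qdef: "q = exp 2 * (real t * real x^2 * p)" and qsmall: "2*q \<le> 1"
  shows "measure_pmf.prob (random_graph (\<Union>i<t. B i) p)
    {G. \<not> (forest (\<Union>i<t. B i) ((\<Union>i<t. BE i) \<union> G) \<and>
         (\<forall>K\<in>components (\<Union>i<t. B i) ((\<Union>i<t. BE i) \<union> G). card K \<le> x*m))}
    \<le> 2*q + exp 2 * real t * q^m"
proof -
  define V where "V = (\<Union>i<t. B i)"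
  define E0 where "E0 = (\<Union>i<t. BE i)"
  define M where "M = random_graph V p"
  define W where "W s m' = {G. \<exists>U\<subseteq>{..<t}. card U = s \<and> m' \<le> card (G \<inter> pairs (\<Union>u\<in>U. B u))}" for s m'
  define Bad where "Bad = {G. \<not> (forest V (E0 \<union> G) \<and> (\<forall>K\<in>components V (E0 \<union> G). card K \<le> x*m))}"
  have q0: "0 \<le> q" unfolding qdef using p by simp
  have sub: "Bad \<subseteq> -{G. G \<subseteq> pairs V} \<union> ((\<Union>s\<in>{1..t}. W s s) \<union> W (Suc m) m)"
  proof
    fix G assume GB: "G \<in> Bad"
    show "G \<in> -{G. G \<subseteq> pairs V} \<union> ((\<Union>s\<in>{1..t}. W s s) \<union> W (Suc m) m)"
    proof (cases "G \<subseteq> pairs V")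
      case False then show ?thesis by blast
    next
      case True
      hence GP: "G \<subseteq> pairs (\<Union>i<t. B i)" unfolding V_def .
      show ?thesis
      proof (cases "forest V (E0 \<union> G)")
        case False
        have "is_graph V (E0 \<union> G)" using graph_R[OF GP] unfolding V_def E0_def .
        hence "has_cycle V (E0 \<union> G)" using False unfolding forest_def by blast
        then obtain U where U: "U \<subseteq> {..<t}" "U \<noteq> {}" "card U \<le> card (G \<inter> pairs (\<Union>u\<in>U. B u))"
          using cyc_witness[OF GP] unfolding V_def E0_def by blast
        have finU: "finite U" using U(1) finite_subset by blast
        have "card U \<le> t" using card_mono[OF _ U(1)] by simp
        moreover have "1 \<le> card U" using U(2) finU by (simp add: Suc_leI card_gt_0_iff)
        moreover have "G \<in> W (card U) (card U)" unfolding W_def using U by blast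
        ultimately show ?thesis by auto
      next
        case True
        then obtain K where K: "K \<in> components V (E0 \<union> G)" "\<not> card K \<le> x*m"
          using GB unfolding Bad_def by blast
        obtain U where "U \<subseteq> {..<t}" "card U = Suc m" "m \<le> card (G \<inter> pairs (\<Union>u\<in>U. B u))"
          using comp_witness[OF GP, of K m] K unfolding V_def E0_def by auto
        hence "G \<in> W (Suc m) m" unfolding W_def by blast
        thus ?thesis by blast
      qed
    qed
  qed
  have z: "measure_pmf.prob M (-{G. G \<subseteq> pairs V}) = 0"
    unfolding measure_pmf_zero_iff M_def random_graph_def by auto
  have "measure_pmf.prob M Bad \<le> measure_pmf.prob M (-{G. G \<subseteq> pairs V} \<union> ((\<Union>s\<in>{1..t}. W s s) \<union> W (Suc m) m))"
    by (rule measure_pmf.finite_measure_mono[OF sub]) simp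
  also have "\<dots> \<le> measure_pmf.prob M (-{G. G \<subseteq> pairs V}) + measure_pmf.prob M ((\<Union>s\<in>{1..t}. W s s) \<union> W (Suc m) m)"
    by (rule measure_Un_le) simp_all
  also have "\<dots> \<le> 0 + (measure_pmf.prob M (\<Union>s\<in>{1..t}. W s s) + measure_pmf.prob M (W (Suc m) m))"
    unfolding z by (intro add_left_mono measure_Un_le) simp_all
  also have "\<dots> \<le> 0 + ((\<Sum>s\<in>{1..t}. measure_pmf.prob M (W s s)) + measure_pmf.prob M (W (Suc m) m))"
    by (intro add_left_mono add_right_mono measure_pmf.finite_measure_subadditive_finite) simp_all
  also have "\<dots> \<le> 0 + ((\<Sum>s\<in>{1..t}. q^s) + exp 2 * real t * q^m)"
  proof (intro add_left_mono add_mono sum_mono)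
    fix s
    have "measure_pmf.prob M (W s s) \<le> real (t choose s) * (real ((s*x)^2))^s / fact s * p^s"
      unfolding M_def W_def V_def by (rule prob_W[OF p])
    also have "\<dots> \<le> q^s" unfolding qdef by (rule num_cyc[OF p(1)])
    finally show "measure_pmf.prob M (W s s) \<le> q^s" .
  next
    have "measure_pmf.prob M (W (Suc m) m) \<le> real (t choose Suc m) * (real ((Suc m*x)^2))^m / fact m * p^m"
      unfolding M_def W_def V_def by (rule prob_W[OF p])
    also have "\<dots> \<le> exp 2 * real t * q^m" unfolding qdef by (rule num_comp[OF p(1)])
    finally show "measure_pmf.prob M (W (Suc m) m) \<le> exp 2 * real t * q^m" .
  qed
  also have "\<dots> \<le> 2*q + exp 2 * real t * q^m"
  proof -
    have "(\<Sum>s\<in>{1..t}. q^s) \<le> 2*q - 2*q^(Suc t)" by (rule geo_small[OF q0 qsmall])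
    moreover have "0 \<le> q^(Suc t)" using q0 by simp
    ultimately show ?thesis by simp
  qed
  finally show ?thesis unfolding M_def Bad_def V_def E0_def .
qed

end



lemma per_n:
  assumes TS: "TS t B BE x" and p: "0 \<le> p" "p \<le> 1" and x1: "1 \<le> x" and xn: "x \<le> n"
    and tn: "real t \<le> real n / real x"
    and dsmall: "real n * p * real x \<le> exp (-3)"
    and ysmall: "real x / real n \<le> exp (-1)"
  shows "1 - (2*(exp 2*(real n*p*real x)) + exp 2*(real x/real n))
    \<le> measure_pmf.prob (random_graph (\<Union>i<t. B i) p)
        {G. forest (\<Union>i<t. B i) ((\<Union>i<t. BE i) \<union> G) \<and>
            (\<forall>K\<in>components (\<Union>i<t. B i) ((\<Union>i<t. BE i) \<union> G).
               real (card K) \<le> 3 * real x * ln (real n / real x))}"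
proof -
  define r where "r = real n / real x"
  define y where "y = real x / real n"
  define d where "d = real n * p * real x"
  have xpos: "real x > 0" using x1 by simp
  have npos: "real n > 0" using x1 xn by simp
  have rpos: "r > 0" unfolding r_def using xpos npos by simp
  have ry: "y = inverse r" unfolding r_def y_def by simp
  have lnr: "ln r \<ge> 1"
  proof -
    have "exp 1 \<le> r"
    proof -
      have "y \<le> exp (-1)" using ysmall y_def by simp
      hence "inverse (exp (-1)) \<le> inverse y" using ry rpos by (intro le_imp_inverse_le) auto
      thus ?thesis using ry by (simp add: exp_minus)
    qed
    hence "ln (exp 1) \<le> ln r" using rpos by (subst ln_le_cancel_iff) auto
    thus ?thesis by simp
  qed
  define q where "q = exp 2 * (real t * real x^2 * p)"
  have q0: "0 \<le> q" unfolding q_def using p by simp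
  have tx: "real t * real x \<le> real n" using tn xpos by (simp add: field_simps)
  have qd: "q \<le> exp 2 * d"
  proof -
    have "real t * real x^2 * p = (real t * real x) * (real x * p)" by (simp add: power2_eq_square)
    also have "\<dots> \<le> real n * (real x * p)" by (rule mult_right_mono[OF tx]) (use p in simp)
    finally have h: "real t * real x^2 * p \<le> real n * p * real x" by (simp add: mult_ac)
    show ?thesis unfolding q_def d_def by (rule mult_left_mono[OF h]) simp
  qed
  have qe: "q \<le> exp (-1)"
  proof -
    have "exp 2 * d \<le> exp 2 * exp (-3)" using dsmall d_def by simp
    hence "q \<le> exp 2 * exp (-3)" using qd by linarith
    also have "\<dots> = exp (-1)" by (simp add: exp_add[symmetric])
    finally show ?thesis .
  qed
  have e1: "exp (-1::real) \<le> 1/2"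
  proof -
    have "2 \<le> exp (1::real)" using exp_ge_add_one_self[of 1] by simp
    thus ?thesis by (simp add: exp_minus field_simps)
  qed
  have q2: "2 * q \<le> 1" using qe e1 by simp
  define m where "m = nat \<lceil>2 * ln r\<rceil>"
  have c0: "0 \<le> \<lceil>2 * ln r\<rceil>" using lnr by simp
  have rm: "real m = real_of_int \<lceil>2 * ln r\<rceil>" unfolding m_def using c0 by simp
  have m1: "real m \<ge> 2 * ln r" unfolding rm by (rule le_of_int_ceiling)
  have "real_of_int \<lceil>2 * ln r\<rceil> \<le> 2 * ln r + 1" by (rule of_int_ceiling_le_add_one)
  hence m2: "real m \<le> 3 * ln r" unfolding rm using lnr by linarith
  have qm: "q^m \<le> y^2"
  proof -
    have "q^m \<le> exp (-1)^m" by (rule power_mono[OF qe q0])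
    also have "\<dots> = exp (real m * (-1))" by (rule exp_of_nat_mult[symmetric])
    also have "\<dots> \<le> exp (- (2 * ln r))" using m1 by simp
    also have "exp (- (2 * ln r)) = inverse (exp (ln r) * exp (ln r))"
      by (simp add: exp_minus exp_add[symmetric])
    also have "\<dots> = y^2" using rpos ry by (simp add: power2_eq_square)
    finally show ?thesis .
  qed
  have tail: "exp 2 * real t * q^m \<le> exp 2 * y"
  proof -
    have "real t \<le> r" using tn r_def by simp
    hence "real t * q^m \<le> r * y^2" by (rule mult_mono[OF _ qm]) (use rpos q0 in auto)
    also have "\<dots> = y" using ry rpos by (simp add: power2_eq_square)
    finally show ?thesis by simp
  qed
  let ?M = "random_graph (\<Union>i<t. B i) p"
  define Bad where "Bad = {G. \<not> (forest (\<Union>i<t. B i) ((\<Union>i<t. BE i) \<union> G) \<and>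
         (\<forall>K\<in>components (\<Union>i<t. B i) ((\<Union>i<t. BE i) \<union> G). card K \<le> x*m))}"
  have bad: "measure_pmf.prob ?M Bad \<le> 2*q + exp 2 * real t * q^m"
    unfolding Bad_def by (rule TS.bad_bound[OF TS p q_def q2])
  have sub: "UNIV - Bad \<subseteq> {G. forest (\<Union>i<t. B i) ((\<Union>i<t. BE i) \<union> G) \<and>
            (\<forall>K\<in>components (\<Union>i<t. B i) ((\<Union>i<t. BE i) \<union> G).
               real (card K) \<le> 3 * real x * ln (real n / real x))}"
  proof
    fix G assume "G \<in> UNIV - Bad"
    hence G: "forest (\<Union>i<t. B i) ((\<Union>i<t. BE i) \<union> G)"
      "\<forall>K\<in>components (\<Union>i<t. B i) ((\<Union>i<t. BE i) \<union> G). card K \<le> x*m" unfolding Bad_def by auto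
    have "real (card K) \<le> 3 * real x * ln (real n / real x)"
      if "K \<in> components (\<Union>i<t. B i) ((\<Union>i<t. BE i) \<union> G)" for K
    proof -
      have "card K \<le> x * m" using G(2) that by blast
      hence "real (card K) \<le> real (x * m)" by (rule of_nat_mono)
      hence "real (card K) \<le> real x * real m" by simp
      also have "\<dots> \<le> real x * (3 * ln r)" by (rule mult_left_mono[OF m2]) simp
      finally show ?thesis unfolding r_def by simp
    qed
    thus "G \<in> {G. forest (\<Union>i<t. B i) ((\<Union>i<t. BE i) \<union> G) \<and>
            (\<forall>K\<in>components (\<Union>i<t. B i) ((\<Union>i<t. BE i) \<union> G).
               real (card K) \<le> 3 * real x * ln (real n / real x))}" using G(1) by blast
  qed
  have "1 - (2*(exp 2*(real n*p*real x)) + exp 2*(real x/real n)) \<le> 1 - (2*q + exp 2 * real t * q^m)"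
    using qd tail d_def y_def by simp
  also have "\<dots> \<le> 1 - measure_pmf.prob ?M Bad" using bad by simp
  also have "\<dots> = measure_pmf.prob ?M (UNIV - Bad)"
    using measure_pmf.prob_compl[of Bad ?M] by simp
  also have "\<dots> \<le> measure_pmf.prob ?M {G. forest (\<Union>i<t. B i) ((\<Union>i<t. BE i) \<union> G) \<and>
            (\<forall>K\<in>components (\<Union>i<t. B i) ((\<Union>i<t. BE i) \<union> G).
               real (card K) \<le> 3 * real x * ln (real n / real x))}"
    by (rule measure_pmf.finite_measure_mono[OF sub]) simp
  finally show ?thesis .
qed




lemma main_lemma:
  fixes p :: "nat \<Rightarrow> real" and x :: "nat \<Rightarrow> nat" and t :: "nat \<Rightarrow> nat"
    and BV :: "nat \<Rightarrow> nat \<Rightarrow> nat set" and BE :: "nat \<Rightarrow> nat \<Rightarrow> nat set set"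
  assumes p01: "\<forall>n. 0 \<le> p n \<and> p n \<le> 1"
    and ex: "\<forall>\<^sub>F n in sequentially. 1 \<le> x n \<and> x n \<le> n"
    and xo: "(\<lambda>n. real (x n) / real n) \<longlonglongrightarrow> 0"
    and dp: "(\<lambda>n. real n * p n * real (x n)) \<longlonglongrightarrow> 0"
    and tb: "\<forall>\<^sub>F n in sequentially. real n / (2 * real (x n)) \<le> real (t n) \<and> real (t n) \<le> real n / real (x n)"
    and trs: "\<forall>\<^sub>F n in sequentially. \<forall>i < t n. is_tree (BV n i) (BE n i) \<and> card (BV n i) \<le> x n"
    and dj: "\<forall>\<^sub>F n in sequentially. \<forall>i < t n. \<forall>j < t n. i \<noteq> j \<longrightarrow> BV n i \<inter> BV n j = {}"
  shows "(\<lambda>n. measure_pmf.prob (random_graph (\<Union>i<t n. BV n i) (p n))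
          {G. forest (\<Union>i<t n. BV n i) ((\<Union>i<t n. BE n i) \<union> G) \<and>
              (\<forall>K \<in> components (\<Union>i<t n. BV n i) ((\<Union>i<t n. BE n i) \<union> G).
                 real (card K) \<le> 3 * real (x n) * ln (real n / real (x n)))})
       \<longlonglongrightarrow> 1"
proof -
  define P where "P n = measure_pmf.prob (random_graph (\<Union>i<t n. BV n i) (p n))
          {G. forest (\<Union>i<t n. BV n i) ((\<Union>i<t n. BE n i) \<union> G) \<and>
              (\<forall>K \<in> components (\<Union>i<t n. BV n i) ((\<Union>i<t n. BE n i) \<union> G).
                 real (card K) \<le> 3 * real (x n) * ln (real n / real (x n)))}" for n
  define L where "L n = 1 - (2*(exp 2*(real n * p n * real (x n))) + exp 2*(real (x n)/real n))" for n
  have e1: "\<forall>\<^sub>F n in sequentially. real n * p n * real (x n) < exp (-3)"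
    using order_tendstoD(2)[OF dp] by simp
  have e2: "\<forall>\<^sub>F n in sequentially. real (x n) / real n < exp (-1)"
    using order_tendstoD(2)[OF xo] by simp
  have low: "\<forall>\<^sub>F n in sequentially. L n \<le> P n"
    using ex tb trs dj e1 e2
  proof eventually_elim
    case (elim n)
    have TS: "TS (t n) (BV n) (BE n) (x n)" unfolding TS_def using elim by blast
    show ?case unfolding L_def P_def
      by (rule per_n[OF TS]) (use elim p01 in auto)
  qed
  have up: "\<forall>\<^sub>F n in sequentially. P n \<le> 1" unfolding P_def by (simp add: measure_pmf.prob_le_1)
  have "L \<longlonglongrightarrow> 1 - (2*(exp 2*0) + exp 2*0)"
    unfolding L_def by (intro tendsto_intros dp xo)
  hence L1: "L \<longlonglongrightarrow> 1" by simp
  have "P \<longlonglongrightarrow> 1" by (rule tendsto_sandwich[OF low up L1 tendsto_const])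
  thus ?thesis unfolding P_def .
qed

theorem mainTheorem11:
  shows "\<exists>C::real. C > 0 \<and>
    (\<forall>(p :: nat \<Rightarrow> real) (x :: nat \<Rightarrow> nat) (t :: nat \<Rightarrow> nat)
       (BV :: nat \<Rightarrow> nat \<Rightarrow> nat set) (BE :: nat \<Rightarrow> nat \<Rightarrow> nat set set).
       (\<forall>n. 0 \<le> p n \<and> p n \<le> 1) \<and>
       (\<forall>\<^sub>F n in sequentially. 1 \<le> x n \<and> x n \<le> n) \<and>
       (\<lambda>n. real (x n) / real n) \<longlonglongrightarrow> 0 \<and>
       (\<lambda>n. real n * p n * real (x n)) \<longlonglongrightarrow> 0 \<and>
       (\<forall>\<^sub>F n in sequentially. real n / (2 * real (x n)) \<le> real (t n) \<and> real (t n) \<le> real n / real (x n)) \<and>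
       (\<forall>\<^sub>F n in sequentially. \<forall>i < t n. is_tree (BV n i) (BE n i) \<and> card (BV n i) \<le> x n) \<and>
       (\<forall>\<^sub>F n in sequentially. \<forall>i < t n. \<forall>j < t n. i \<noteq> j \<longrightarrow> BV n i \<inter> BV n j = {})
     \<longrightarrow>
       (\<lambda>n. measure_pmf.prob (random_graph (\<Union>i<t n. BV n i) (p n))
          {G. forest (\<Union>i<t n. BV n i) ((\<Union>i<t n. BE n i) \<union> G) \<and>
              (\<forall>K \<in> components (\<Union>i<t n. BV n i) ((\<Union>i<t n. BE n i) \<union> G).
                 real (card K) \<le> C * real (x n) * ln (real n / real (x n)))})
       \<longlonglongrightarrow> 1)"
proof (intro exI[of _ "3::real"] conjI allI impI)
  show "(3::real) > 0" by simp
next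
  fix p :: "nat \<Rightarrow> real" and x :: "nat \<Rightarrow> nat" and t :: "nat \<Rightarrow> nat"
    and BV :: "nat \<Rightarrow> nat \<Rightarrow> nat set" and BE :: "nat \<Rightarrow> nat \<Rightarrow> nat set set"
  assume H: "(\<forall>n. 0 \<le> p n \<and> p n \<le> 1) \<and>
       (\<forall>\<^sub>F n in sequentially. 1 \<le> x n \<and> x n \<le> n) \<and>
       (\<lambda>n. real (x n) / real n) \<longlonglongrightarrow> 0 \<and>
       (\<lambda>n. real n * p n * real (x n)) \<longlonglongrightarrow> 0 \<and>
       (\<forall>\<^sub>F n in sequentially. real n / (2 * real (x n)) \<le> real (t n) \<and> real (t n) \<le> real n / real (x n)) \<and>
       (\<forall>\<^sub>F n in sequentially. \<forall>i < t n. is_tree (BV n i) (BE n i) \<and> card (BV n i) \<le> x n) \<and>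
       (\<forall>\<^sub>F n in sequentially. \<forall>i < t n. \<forall>j < t n. i \<noteq> j \<longrightarrow> BV n i \<inter> BV n j = {})"
  show "(\<lambda>n. measure_pmf.prob (random_graph (\<Union>i<t n. BV n i) (p n))
          {G. forest (\<Union>i<t n. BV n i) ((\<Union>i<t n. BE n i) \<union> G) \<and>
              (\<forall>K \<in> components (\<Union>i<t n. BV n i) ((\<Union>i<t n. BE n i) \<union> G).
                 real (card K) \<le> 3 * real (x n) * ln (real n / real (x n)))})
       \<longlonglongrightarrow> 1"
    using main_lemma[of p x t BV BE] H by blast
qed



end
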